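(* Let $f=f(n)\ge0$ with $f\to\infty$ and let $\alpha>0$ be a constant. There exist constants $\zeta>0$ and $C>0$ such that, for all sufficiently large $n$ and every $f/n\le p\le1$, with probability at least $1-Ce^{-(pn)^2}$ the following holds in $\mathcal G(n,p)$: for every $s\le\zeta n$ and every set $S\subseteq[n]$ of size $s$, $|E[S]|\le\alpha pns$.
   Context: $\mathcal G(n,p)$ is the Erdős–Rényi random graph on $[n]$ with edge probability $p$; $E[S]$ is the set of edges with both ends in $S$. *)

theory Defs
  imports "HOL-Probability.Probability"
begin

definition all_edges :: "nat \<Rightarrow> nat set set" where
  "all_edges n = {e. \<exists>i j. 1 \<le> i \<and> i < j \<and> j \<le> n \<and> e = {i, j}}"

definition gnp :: "nat \<Rightarrow> real \<Rightarrow> nat set set pmf" where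
  "gnp n p = map_pmf (\<lambda>b. {e \<in> all_edges n. b e})
                (Pi_pmf (all_edges n) False (\<lambda>_. bernoulli_pmf p))"

definition edges_in :: "nat set set \<Rightarrow> nat set \<Rightarrow> nat set set" where
  "edges_in E S = {e \<in> E. e \<subseteq> S}"

end

theory Submission
  imports Defs
begin

lemma pow_fact_le_exp:
  fixes x :: real assumes "0 \<le> x" shows "x ^ k / fact k \<le> exp x"
proof -
  have s: "(\<lambda>n. x^n / fact n) sums exp x"
    using exp_converges[of x] by (simp add: divide_inverse_commute scaleR_conv_of_real)
  have "sum (\<lambda>n. x^n / fact n) {k} \<le> suminf (\<lambda>n. x^n / fact n)"
    by (rule sum_le_suminf) (use s assms in \<open>auto simp: sums_iff\<close>)
  thus ?thesis using s by (simp add: sums_iff)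
qed

lemma finite_all_edges: "finite (all_edges n)"
proof -
  have "all_edges n \<subseteq> Pow {1..n}" unfolding all_edges_def by auto
  thus ?thesis by (rule finite_subset) auto
qed

lemma set_gnp: "E \<in> set_pmf (gnp n p) \<Longrightarrow> E \<subseteq> all_edges n"
  unfolding gnp_def by auto

lemma prob_gnp_subset:
  assumes T: "T \<subseteq> all_edges n" and p: "0 \<le> p" "p \<le> 1"
  shows "measure_pmf.prob (gnp n p) {E. T \<subseteq> E} = p ^ card T"
proof -
  let ?A = "all_edges n"
  have fin: "finite ?A" by (rule finite_all_edges)
  have "measure_pmf.prob (gnp n p) {E. T \<subseteq> E} =
        measure_pmf.prob (Pi_pmf ?A False (\<lambda>_. bernoulli_pmf p)) (Pi ?A (\<lambda>e. if e \<in> T then {True} else UNIV))"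
    unfolding gnp_def measure_map_pmf
    by (rule arg_cong[where f="measure_pmf.prob _"]) (use T in \<open>auto simp: Pi_def split: if_splits\<close>)
  also have "\<dots> = (\<Prod>e\<in>?A. measure_pmf.prob (bernoulli_pmf p) (if e \<in> T then {True} else UNIV))"
    by (rule measure_Pi_pmf_Pi[OF fin])
  also have "\<dots> = (\<Prod>e\<in>?A. if e \<in> T then p else 1)"
    by (rule prod.cong) (use p in \<open>auto simp: measure_pmf_single\<close>)
  also have "\<dots> = p ^ card T"
    using fin T by (simp add: prod.If_cases Int_absorb1)
  finally show ?thesis .
qed

lemma card_edges_in_all: "finite S \<Longrightarrow> card (edges_in (all_edges n) S) \<le> card S ^ 2"
proof -
  assume S: "finite S"
  have "edges_in (all_edges n) S \<subseteq> (\<lambda>(i,j). {i,j}) ` (S \<times> S)"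
    unfolding edges_in_def all_edges_def by auto
  hence "card (edges_in (all_edges n) S) \<le> card ((\<lambda>(i,j). {i,j}) ` (S \<times> S))"
    by (intro card_mono) (use S in auto)
  also have "\<dots> \<le> card (S \<times> S)" by (rule card_image_le) (use S in auto)
  finally show ?thesis by (simp add: card_cartesian_product power2_eq_square)
qed

lemma choose_fact_le: "real (N choose m) * fact m \<le> real N ^ m"
proof (cases "m \<le> N")
  case True
  have "fact m * fact (N - m) * (N choose m) = fact N" using binomial_fact_lemma[OF True] .
  hence "(N choose m) * fact m = fact N div fact (N - m)"
    by (metis mult.commute nonzero_mult_div_cancel_left fact_nonzero mult.assoc)
  also have "\<dots> \<le> N ^ m" by (rule fact_div_fact_le_pow[OF True])
  finally have "(N choose m) * fact m \<le> N ^ m" .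
  hence "real ((N choose m) * fact m) \<le> real (N ^ m)" by linarith
  thus ?thesis by simp
qed (simp add: binomial_eq_0)

lemma pow_div_fact_le: fixes x y :: real assumes "x > 0" and that: "0 \<le> y" "x = real k" "k > 0"
  shows "y ^ k / fact k \<le> (exp 1 * y / x) ^ k"
proof -
  have "x ^ k / fact k \<le> exp x" by (rule pow_fact_le_exp) (use assms in auto)
  also have "exp x = exp 1 ^ k" using that exp_of_nat_mult[of k 1] by simp
  finally have h: "x ^ k / fact k \<le> exp 1 ^ k" .
  have xy: "(y / x) ^ k * x ^ k = y ^ k"
    using assms by (simp add: power_divide)
  have "y ^ k / fact k = (y / x) ^ k * (x ^ k / fact k)"
    by (simp only: xy times_divide_eq_right)
  also have "\<dots> \<le> (y/x) ^ k * exp 1 ^ k"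
    by (rule mult_left_mono[OF h]) (use assms that in auto)
  also have "\<dots> = (y / x * exp 1) ^ k" by (rule power_mult_distrib[symmetric])
  also have "y / x * exp 1 = exp 1 * y / x" by simp
  finally show ?thesis .
qed

lemma key_bound:
  fixes n s m :: nat and p \<alpha> \<zeta> c q :: real
  assumes n: "n > 0" and s: "1 \<le> s" "real s \<le> \<zeta> * real n"
    and \<alpha>: "\<alpha> > 0" and p: "p > 0"
    and m: "real m \<ge> \<alpha> * p * real n * real s" and k2: "\<alpha> * p * real n \<ge> 2"
    and \<zeta>: "\<zeta> = c^2 / exp 1" and c: "0 < c" "c \<le> 1" and q: "exp 1 / \<alpha> * c \<le> q"
  shows "real (n choose s) * (real (s^2) ^ m / fact m * p ^ m) \<le> q ^ m"
proof -
  define e where "e = exp (1::real)"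
  have e1: "e \<ge> 1" unfolding e_def by simp
  define x where "x = real s / real n"
  have x0: "x > 0" using n s unfolding x_def by auto
  have m2: "real m \<ge> 2 * real s"
  proof -
    have "2 * real s \<le> \<alpha> * p * real n * real s" using k2 s by (intro mult_right_mono) auto
    thus ?thesis using m by linarith
  qed
  hence m2': "m \<ge> 2 * s" by linarith
  have mpos: "m > 0" using m2' s by linarith
  have b1: "real (n choose s) \<le> (e * real n / real s) ^ s"
  proof -
    have "real (n choose s) * fact s \<le> real n ^ s" by (rule choose_fact_le)
    hence "real (n choose s) \<le> real n ^ s / fact s" by (simp add: field_simps)
    also have "\<dots> \<le> (e * real n / real s) ^ s" unfolding e_def
      by (rule pow_div_fact_le) (use s in auto)
    finally show ?thesis .
  qed
  have b2: "real (s^2) ^ m / fact m * p ^ m \<le> (e * x / \<alpha>) ^ m"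
  proof -
    have "real (s^2) ^ m / fact m * p ^ m = (real (s^2) * p) ^ m / fact m"
      by (simp add: power_mult_distrib)
    also have "\<dots> \<le> (e * (real (s^2) * p) / real m) ^ m" unfolding e_def
      by (rule pow_div_fact_le) (use mpos p in auto)
    also have "\<dots> \<le> (e * x / \<alpha>) ^ m"
    proof (rule power_mono)
      have "real (s^2) * p / real m \<le> real (s^2) * p / (\<alpha> * p * real n * real s)"
      proof (rule divide_left_mono)
        have apos: "0 < \<alpha> * p * real n * real s" using \<alpha> p n s by simp
        hence "real m > 0" using m by linarith
        thus "0 < real m * (\<alpha> * p * real n * real s)" using apos by simp
      qed (use m p in auto)
      also have "\<dots> = x / \<alpha>" unfolding x_def using \<alpha> p n s by (simp add: field_simps power2_eq_square)
      finally have "real (s^2) * p / real m \<le> x / \<alpha>" .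
      hence "e * (real (s^2) * p / real m) \<le> e * (x / \<alpha>)" using e1 by (intro mult_left_mono) auto
      thus "e * (real (s^2) * p) / real m \<le> e * x / \<alpha>" by simp
      show "0 \<le> e * (real (s^2) * p) / real m" using e1 p by auto
    qed
    finally show ?thesis .
  qed
  have "real (n choose s) * (real (s^2) ^ m / fact m * p ^ m) \<le> (e * real n / real s) ^ s * (e * x / \<alpha>) ^ m"
    by (rule mult_mono[OF b1 b2]) (use p e1 in auto)
  also have "(e * real n / real s) = e / x" unfolding x_def by simp
  also have "(e / x) ^ s * (e * x / \<alpha>) ^ m = (e / \<alpha>) ^ m * (e ^ s * x ^ (m - s))"
  proof -
    have mm: "m = s + (m - s)" using m2' by simp
    have xm: "x ^ m = x ^ s * x ^ (m - s)" by (subst mm) (simp add: power_add)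
    have "(e * x / \<alpha>) ^ m = (e / \<alpha>) ^ m * x ^ m"
      by (simp add: power_mult_distrib power_divide)
    hence "(e * x / \<alpha>) ^ m = (e / \<alpha>) ^ m * x ^ s * x ^ (m - s)" using xm by simp
    have h: "(e / x) ^ s * x ^ s = e ^ s" using x0 by (simp add: power_divide)
    have "(e / x) ^ s * (e * x / \<alpha>) ^ m = (e / \<alpha>) ^ m * (((e / x) ^ s * x ^ s) * x ^ (m - s))"
      unfolding \<open>(e * x / \<alpha>) ^ m = (e / \<alpha>) ^ m * x ^ s * x ^ (m - s)\<close> by (simp only: ac_simps)
    thus ?thesis unfolding h .
  qed
  also have "\<dots> \<le> (e / \<alpha>) ^ m * (c ^ m)"
  proof (rule mult_left_mono)
    have "e ^ s * x ^ (m - s) \<le> e ^ (m - s) * x ^ (m - s)"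
      by (intro mult_right_mono power_increasing) (use m2' e1 x0 in auto)
    also have "\<dots> = (e * x) ^ (m - s)" by (simp add: power_mult_distrib)
    also have "\<dots> \<le> (c^2) ^ (m - s)"
    proof (rule power_mono)
      have "x \<le> \<zeta>" unfolding x_def using s n by (simp add: divide_le_eq)
      hence "e * x \<le> e * \<zeta>" using e1 by simp
      thus "e * x \<le> c^2" unfolding \<zeta> e_def by simp
    qed (use x0 e1 in auto)
    also have "\<dots> = c ^ (2 * (m - s))" by (simp add: power_mult)
    also have "\<dots> \<le> c ^ m" by (rule power_decreasing) (use m2' c in auto)
    finally show "e ^ s * x ^ (m - s) \<le> c ^ m" .
  qed (use \<alpha> e1 in auto)
  also have "\<dots> = (e / \<alpha> * c) ^ m" by (simp only: power_mult_distrib)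
  also have "\<dots> \<le> q ^ m" by (rule power_mono) (use q c \<alpha> e1 in \<open>auto simp: e_def\<close>)
  finally show ?thesis .
qed

lemma geom_half: "(\<Sum>s\<in>{0..n}. if s = 0 then 0 else (1/2::real) ^ s) = 1 - (1/2) ^ n"
proof (induction n)
  case 0
  show ?case by simp
next
  case (Suc n)
  have "(\<Sum>s\<in>{0..Suc n}. if s = 0 then 0 else (1/2::real) ^ s)
        = (\<Sum>s\<in>{0..n}. if s = 0 then 0 else (1/2::real) ^ s) + (1/2) ^ Suc n"
    by (simp only: sum.atLeast0_atMost_Suc) simp
  also have "\<dots> = 1 - (1/2) ^ n + (1/2) ^ Suc n" using Suc by simp
  also have "\<dots> = 1 - (1/2) ^ Suc n" by simp
  finally show ?case .
qed

lemma q_bound: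
  fixes \<alpha> K :: real and m s :: nat
  assumes \<alpha>: "\<alpha> > 0" and K: "K \<ge> \<alpha>" and s: "s \<ge> 1"
    and m1: "real m \<ge> \<alpha> * K * real s" and m2: "m \<le> s^2"
  shows "exp (- 2 / \<alpha>^2) ^ m \<le> exp (- (K^2)) * (1/2) ^ s"
proof -
  have Kp: "K > 0" using \<alpha> K by linarith
  have "real s * real s \<ge> \<alpha> * K * real s" using m1 m2
    by (metis (mono_tags, opaque_lifting) of_nat_le_iff of_nat_mult order_trans power2_eq_square)
  hence ss: "real s \<ge> \<alpha> * K" using s by simp
  have mm: "real m \<ge> (\<alpha> * K) * (\<alpha> * K)"
  proof -
    have t: "(\<alpha>*K)*(\<alpha>*K) \<le> (\<alpha>*K)*real s" by (rule mult_left_mono[OF ss]) (use \<alpha> Kp in auto)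
    thus ?thesis using m1 by linarith
  qed
  have "exp (- 2 / \<alpha>^2) ^ m = exp (- (2 * real m / \<alpha>^2))"
    by (simp add: exp_of_nat_mult[symmetric])
  also have "\<dots> \<le> exp (- (K^2) + (- (K / \<alpha>) * real s))"
  proof -
    have a: "K^2 \<le> real m / \<alpha>^2" using mm \<alpha> by (simp add: field_simps power2_eq_square)
    have b: "K / \<alpha> * real s \<le> real m / \<alpha>^2" using m1 \<alpha> by (simp add: field_simps power2_eq_square)
    have "2 * real m / \<alpha>^2 = real m / \<alpha>^2 + real m / \<alpha>^2" by simp
    thus ?thesis using a b by simp
  qed
  also have "\<dots> = exp (- (K^2)) * exp (- (K / \<alpha>)) ^ s"
  proof -
    have "exp (- (K^2) + (- (K / \<alpha>) * real s)) = exp (- (K^2)) * exp (real s * (- (K / \<alpha>)))"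
      by (subst exp_add) (simp only: mult.commute)
    thus ?thesis by (simp only: exp_of_nat_mult)
  qed
  also have "\<dots> \<le> exp (- (K^2)) * (1/2) ^ s"
  proof (intro mult_left_mono power_mono)
    have "exp (- (K / \<alpha>)) \<le> exp (-1)" using K \<alpha> by (simp add: field_simps)
    also have "exp (-1::real) = 1 / exp 1" by (simp add: exp_minus field_simps)
    also have "\<dots> \<le> 1/2" using exp_ge_add_one_self[of "1::real"] by simp
    finally show "exp (- (K / \<alpha>)) \<le> 1/2" .
  qed auto
  finally show ?thesis .
qed

lemma main_bound:
  fixes n :: nat and p \<alpha> \<zeta> c q :: real
  assumes n: "n > 0" and \<alpha>: "\<alpha> > 0" and p: "p > 0" "p \<le> 1"
    and k2: "\<alpha> * p * real n \<ge> 2" and K: "p * real n \<ge> \<alpha>"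
    and q: "q = exp (- 2 / \<alpha>^2)"
    and \<zeta>: "\<zeta> = c^2 / exp 1" and c: "0 < c" "c \<le> 1" and cq: "exp 1 / \<alpha> * c \<le> q"
  shows "measure_pmf.prob (gnp n p)
             (- {E. \<forall>S. S \<subseteq> {1..n} \<and> real (card S) \<le> \<zeta> * real n \<longrightarrow>
                   real (card (edges_in E S)) \<le> \<alpha> * p * real n * real (card S)})
          \<le> exp (- ((p * real n)^2))"
proof -
  define K where "K = p * real n"
  define msz where "msz = (\<lambda>s::nat. nat \<lfloor>\<alpha> * p * real n * real s\<rfloor> + 1)"
  define Sets where "Sets = {S. S \<subseteq> {1..n} \<and> real (card S) \<le> \<zeta> * real n}"
  define Ts where "Ts = (\<lambda>S. {T. T \<subseteq> edges_in (all_edges n) S \<and> card T = msz (card S)})"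
  define U where "U = (\<Union>S\<in>Sets. \<Union>T\<in>Ts S. {E. T \<subseteq> E})"
  define Bad where "Bad = - {E. \<forall>S. S \<subseteq> {1..n} \<and> real (card S) \<le> \<zeta> * real n \<longrightarrow>
                   real (card (edges_in E S)) \<le> \<alpha> * p * real n * real (card S)}"
  define B where "B = (\<lambda>s::nat. if msz s \<le> s^2 then real (s^2) ^ msz s / fact (msz s) * p ^ msz s else 0)"
  define M where "M = gnp n p"
  have msz_ge: "real (msz s) \<ge> \<alpha> * p * real n * real s" for s
    unfolding msz_def by linarith
  have finSets: "finite Sets" unfolding Sets_def
    by (rule finite_subset[of _ "Pow {1..n}"]) auto
  have finEA: "finite (edges_in (all_edges n) S)" for S
    by (rule finite_subset[OF _ finite_all_edges]) (auto simp: edges_in_def)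
  have finTs: "finite (Ts S)" for S unfolding Ts_def
    by (rule finite_subset[of _ "Pow (edges_in (all_edges n) S)"]) (use finEA in auto)
  have cardSets: "card S \<le> n" if "S \<in> Sets" for S
  proof -
    have "S \<subseteq> {1..n}" using that unfolding Sets_def by blast
    hence "card S \<le> card {1..n}" by (rule card_mono[rotated]) simp
    thus ?thesis by simp
  qed
  have step1: "Bad \<inter> set_pmf M \<subseteq> U"
  proof
    fix E assume "E \<in> Bad \<inter> set_pmf M"
    hence EB: "E \<in> Bad" and "E \<in> set_pmf (gnp n p)" unfolding M_def by blast+
    hence EA: "E \<subseteq> all_edges n" by (blast dest: set_gnp)
    from EB have "\<exists>S. (S \<subseteq> {1..n} \<and> real (card S) \<le> \<zeta> * real n) \<and>
         \<not> real (card (edges_in E S)) \<le> \<alpha> * p * real n * real (card S)"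
      unfolding Bad_def by simp
    then obtain S where S: "S \<subseteq> {1..n}" "real (card S) \<le> \<zeta> * real n"
      and big0: "\<not> real (card (edges_in E S)) \<le> \<alpha> * p * real n * real (card S)"
      by blast
    have big: "real (card (edges_in E S)) > \<alpha> * p * real n * real (card S)" using big0 by simp
    have "msz (card S) \<le> card (edges_in E S)"
    proof -
      have "of_int \<lfloor>\<alpha> * p * real n * real (card S)\<rfloor> < real (card (edges_in E S))"
        using big of_int_floor_le[of "\<alpha> * p * real n * real (card S)"] by linarith
      hence "\<lfloor>\<alpha> * p * real n * real (card S)\<rfloor> < int (card (edges_in E S))" by linarith
      hence "nat \<lfloor>\<alpha> * p * real n * real (card S)\<rfloor> < card (edges_in E S)" 
        using nat_less_iff[of "\<lfloor>\<alpha> * p * real n * real (card S)\<rfloor>"] \<alpha> p by simp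
      thus ?thesis unfolding msz_def by simp
    qed
    then obtain T where T: "T \<subseteq> edges_in E S" "card T = msz (card S)"
      by (rule obtain_subset_with_card_n)
    have "T \<subseteq> edges_in (all_edges n) S" using T EA unfolding edges_in_def by auto
    hence "T \<in> Ts S" using T unfolding Ts_def by blast
    moreover have "S \<in> Sets" using S unfolding Sets_def by auto
    moreover have "T \<subseteq> E" using T unfolding edges_in_def by auto
    ultimately show "E \<in> U" unfolding U_def by blast
  qed
  have "measure_pmf.prob M Bad = measure_pmf.prob M (Bad \<inter> set_pmf M)"
    by (rule measure_Int_set_pmf[symmetric])
  also have "\<dots> \<le> measure_pmf.prob M U"
    by (rule measure_pmf.finite_measure_mono[OF step1]) simp
  also have "\<dots> \<le> (\<Sum>S\<in>Sets. measure_pmf.prob M (\<Union>T\<in>Ts S. {E. T \<subseteq> E}))"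
    unfolding U_def by (rule measure_pmf.finite_measure_subadditive_finite[OF finSets]) simp
  also have "\<dots> \<le> (\<Sum>S\<in>Sets. \<Sum>T\<in>Ts S. measure_pmf.prob M {E. T \<subseteq> E})"
    by (intro sum_mono measure_pmf.finite_measure_subadditive_finite finTs) simp
  also have "\<dots> = (\<Sum>S\<in>Sets. \<Sum>T\<in>Ts S. p ^ msz (card S))"
  proof (intro sum.cong refl)
    fix S T assume "T \<in> Ts S"
    hence "T \<subseteq> all_edges n" "card T = msz (card S)" unfolding Ts_def edges_in_def by auto
    thus "measure_pmf.prob M {E. T \<subseteq> E} = p ^ msz (card S)"
      unfolding M_def using prob_gnp_subset[of T n p] p by simp
  qed
  also have "\<dots> \<le> (\<Sum>S\<in>Sets. B (card S))"
  proof (rule sum_mono)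
    fix S assume "S \<in> Sets"
    hence finS: "finite S" unfolding Sets_def using finite_subset[OF _ finite_atLeastAtMost[of 1 n]] by blast
    let ?N = "card (edges_in (all_edges n) S)" and ?m = "msz (card S)" and ?s = "card S"
    have N: "?N \<le> ?s^2" by (rule card_edges_in_all[OF finS])
    have cTs: "card (Ts S) = ?N choose ?m" unfolding Ts_def by (rule n_subsets[OF finEA])
    have "(\<Sum>T\<in>Ts S. p ^ ?m) = real (card (Ts S)) * p ^ ?m" by (rule sum_constant)
    hence "(\<Sum>T\<in>Ts S. p ^ ?m) = real (?N choose ?m) * p ^ ?m" by (simp only: cTs)
    also have "\<dots> \<le> B ?s"
    proof (cases "?m \<le> ?s^2")
      case True
      have "real (?N choose ?m) \<le> real ?N ^ ?m / fact ?m"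
        using choose_fact_le[of ?N ?m] by (simp add: le_divide_eq)
      also have "\<dots> \<le> real (?s^2) ^ ?m / fact ?m"
      proof (rule divide_right_mono)
        have "real ?N \<le> real (?s^2)" using N by (simp only: of_nat_le_iff)
        thus "real ?N ^ ?m \<le> real (?s^2) ^ ?m" by (rule power_mono) simp
      qed simp
      finally have "real (?N choose ?m) * p ^ ?m \<le> real (?s^2) ^ ?m / fact ?m * p ^ ?m"
        by (rule mult_right_mono) (use p in auto)
      moreover have "B ?s = real (?s^2) ^ ?m / fact ?m * p ^ ?m" unfolding B_def using True by simp
      ultimately show ?thesis by simp
    next
      case False
      hence "?N < ?m" using N by linarith
      hence z1: "?N choose ?m = 0" by (rule binomial_eq_0)
      have z2: "B ?s = 0" unfolding B_def using False by simp
      show ?thesis by (simp only: z1 z2 of_nat_0 mult_zero_left order_refl)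
    qed
    finally show "(\<Sum>T\<in>Ts S. p ^ ?m) \<le> B ?s" .
  qed
  also have "\<dots> = (\<Sum>s\<in>{0..n}. \<Sum>S\<in>{S\<in>Sets. card S = s}. B (card S))"
    by (rule sum.group[symmetric, OF finSets]) (use cardSets in auto)
  also have "\<dots> \<le> (\<Sum>s\<in>{0..n}. exp (- (K^2)) * (if s = 0 then 0 else (1/2) ^ s))"
  proof (rule sum_mono)
    fix s assume "s \<in> {0..n}"
    have "(\<Sum>S\<in>{S\<in>Sets. card S = s}. B (card S)) = real (card {S\<in>Sets. card S = s}) * B s"
    proof -
      have "(\<Sum>S\<in>{S\<in>Sets. card S = s}. B (card S)) = (\<Sum>S\<in>{S\<in>Sets. card S = s}. B s)"
        by (rule sum.cong) auto
      thus ?thesis by simp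
    qed
    also have "\<dots> \<le> exp (- (K^2)) * (if s = 0 then 0 else (1/2) ^ s)"
    proof (cases "{S\<in>Sets. card S = s} = {} \<or> B s = 0")
      case True
      hence "real (card {S\<in>Sets. card S = s}) * B s = 0"
        by (metis card.empty mult_zero_left mult_zero_right of_nat_0)
      moreover have "0 \<le> exp (- (K^2)) * (if s = 0 then 0 else (1/2::real) ^ s)" by simp
      ultimately show ?thesis by linarith
    next
      case False
      then obtain S0 where S0: "S0 \<in> Sets" "card S0 = s" by auto
      have sz: "real s \<le> \<zeta> * real n" "s \<le> n" using S0 cardSets[OF S0(1)] unfolding Sets_def
        by auto
      have Bne: "B s \<noteq> 0" using False by blast
      have Bs2: "msz s \<le> s^2"
      proof (rule ccontr)
        assume "\<not> msz s \<le> s^2" hence "B s = 0" unfolding B_def by simp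
        thus False using Bne by simp
      qed
      have Bs1: "B s = real (s^2) ^ msz s / fact (msz s) * p ^ msz s" unfolding B_def using Bs2 by simp
      note Bs = Bs1 Bs2
      have s1: "s \<ge> 1"
      proof (rule ccontr)
        assume "\<not> s \<ge> 1" hence "s = 0" by simp
        thus False using Bs(2) unfolding msz_def by simp
      qed
      have cardle: "card {S\<in>Sets. card S = s} \<le> n choose s"
      proof -
        have "card {S\<in>Sets. card S = s} \<le> card {S. S \<subseteq> {1..n} \<and> card S = s}"
        proof (rule card_mono)
          show "finite {S. S \<subseteq> {1..n} \<and> card S = s}"
            by (rule finite_subset[of _ "Pow {1..n}"]) auto
        qed (auto simp: Sets_def)
        thus ?thesis using n_subsets[of "{1..n}" s] by simp
      qed
      have "real (card {S\<in>Sets. card S = s}) * B s \<le> real (n choose s) * B s"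
        by (rule mult_right_mono) (use cardle Bs p in auto)
      also have "\<dots> \<le> q ^ msz s" unfolding Bs(1)
        by (rule key_bound[OF n s1 sz(1) \<alpha> p(1) msz_ge k2 \<zeta> c cq])
      also have "\<dots> \<le> exp (- (K^2)) * (1/2) ^ s" unfolding q
      proof (rule q_bound[OF \<alpha> _ s1 _ Bs(2)])
        show "\<alpha> \<le> K" using K unfolding K_def .
        show "\<alpha> * K * real s \<le> real (msz s)" using msz_ge[of s] unfolding K_def by (simp only: mult.assoc)
      qed
      finally show ?thesis using s1 by simp
    qed
    finally show "(\<Sum>S\<in>{S\<in>Sets. card S = s}. B (card S)) \<le> exp (- (K^2)) * (if s = 0 then 0 else (1/2) ^ s)" .
  qed
  also have "\<dots> = exp (- (K^2)) * (1 - (1/2)^n)"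
    by (subst sum_distrib_left[symmetric]) (simp only: geom_half)
  also have "\<dots> \<le> exp (- (K^2))" by (rule mult_left_le) simp_all
  finally show ?thesis unfolding Bad_def M_def K_def by simp
qed

theorem lemma4p14:
  fixes f :: "nat \<Rightarrow> real" and \<alpha> :: real
  assumes "\<And>n. f n \<ge> 0"
    and "filterlim f at_top sequentially"
    and "\<alpha> > 0"
  shows "\<exists>\<zeta>>0. \<exists>C>0. \<forall>\<^sub>F n in sequentially. \<forall>p::real.
           f n / real n \<le> p \<and> p \<le> 1 \<longrightarrow>
           measure_pmf.prob (gnp n p)
             {E. \<forall>S. S \<subseteq> {1..n} \<and> real (card S) \<le> \<zeta> * real n \<longrightarrow>
                   real (card (edges_in E S)) \<le> \<alpha> * p * real n * real (card S)}
           \<ge> 1 - C * exp (- ((p * real n)^2))"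
proof -
  have \<alpha>: "\<alpha> > 0" by fact
  define q where "q = exp (- 2 / \<alpha>^2)"
  define c where "c = min 1 (q * \<alpha> / exp 1)"
  define \<zeta> where "\<zeta> = c^2 / exp 1"
  have c: "0 < c" "c \<le> 1" unfolding c_def q_def using \<alpha> by auto
  have cq: "exp 1 / \<alpha> * c \<le> q"
  proof -
    have "c \<le> q * \<alpha> / exp 1" unfolding c_def by simp
    hence "exp 1 / \<alpha> * c \<le> exp 1 / \<alpha> * (q * \<alpha> / exp 1)" using \<alpha> by (intro mult_left_mono) auto
    thus ?thesis using \<alpha> by simp
  qed
  have \<zeta>0: "\<zeta> > 0" unfolding \<zeta>_def using c by simp
  have ev1: "\<forall>\<^sub>F n in sequentially. max (2/\<alpha>) \<alpha> \<le> f n"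
    using assms(2) unfolding filterlim_at_top by blast
  have ev2: "\<forall>\<^sub>F n in sequentially. (1::nat) \<le> n" by (rule eventually_ge_at_top)
  have "\<forall>\<^sub>F n in sequentially. \<forall>p::real.
           f n / real n \<le> p \<and> p \<le> 1 \<longrightarrow>
           measure_pmf.prob (gnp n p)
             {E. \<forall>S. S \<subseteq> {1..n} \<and> real (card S) \<le> \<zeta> * real n \<longrightarrow>
                   real (card (edges_in E S)) \<le> \<alpha> * p * real n * real (card S)}
           \<ge> 1 - 1 * exp (- ((p * real n)^2))"
    using ev1 ev2
  proof eventually_elim
    case (elim n)
    show ?case
    proof (intro allI impI)
      fix p :: real assume pp: "f n / real n \<le> p \<and> p \<le> 1"
      have n: "n > 0" using elim by simp
      have Kf: "p * real n \<ge> f n" using pp n by (simp add: divide_le_eq)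
      have K: "p * real n \<ge> \<alpha>" "p * real n \<ge> 2 / \<alpha>" using Kf elim by auto
      have p0: "p > 0"
      proof (rule ccontr)
        assume "\<not> p > 0" hence "p * real n \<le> 0" by (simp add: mult_nonpos_nonneg)
        thus False using K \<alpha> by linarith
      qed
      have k2: "\<alpha> * p * real n \<ge> 2"
      proof -
        have "\<alpha> * (2 / \<alpha>) \<le> \<alpha> * (p * real n)" using K \<alpha> by (intro mult_left_mono) auto
        thus ?thesis using \<alpha> by (simp add: mult.assoc)
      qed
      let ?G = "{E. \<forall>S. S \<subseteq> {1..n} \<and> real (card S) \<le> \<zeta> * real n \<longrightarrow>
                   real (card (edges_in E S)) \<le> \<alpha> * p * real n * real (card S)}"
      have b: "measure_pmf.prob (gnp n p) (- ?G) \<le> exp (- ((p * real n)^2))"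
        by (rule main_bound[OF n \<alpha> p0 _ k2 K(1) q_def \<zeta>_def c cq]) (use pp in auto)
      have "measure_pmf.prob (gnp n p) (UNIV - ?G) = 1 - measure_pmf.prob (gnp n p) ?G"
        using measure_pmf.prob_compl[of ?G "gnp n p"] by simp
      hence "measure_pmf.prob (gnp n p) ?G = 1 - measure_pmf.prob (gnp n p) (- ?G)"
        by (simp add: Compl_eq_Diff_UNIV)
      thus "measure_pmf.prob (gnp n p) ?G \<ge> 1 - 1 * exp (- ((p * real n)^2))" using b by simp
    qed
  qed
  thus ?thesis using \<zeta>0 by (intro exI[of _ \<zeta>] conjI exI[of _ "1::real"]) auto
qed

end
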